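(* Let $a\in\mathbb{H}$ have norm one, $\psi$ a linear isometry of $\mathbb{H}$, and $\varphi=T_{a,\bar a}\circ\sigma_{\mathbb{H}}$. Consider the conditions (i) $\varphi(\varphi(x)x)=\varphi(x)x$ for all $x$, (ii) $\varphi(\bar x\psi(x))=\bar x\psi(x)$ for all $x$, (iii) $\psi(\psi(y)\bar x+y\varphi(x))=\psi(y)\bar x+y\varphi(x)$ for all $x,y$. Then: (1) $(\varphi,\psi)$ satisfies (i) if and only if $a^2=\pm1$. (2) Assume $a^2=-1$. (a) For norm-one $b,c\in\mathrm{Im}(\mathbb{H})$, the pair $(\varphi,T_{b,c})$ satisfies (ii) and (iii) if and only if $c=\pm a$. (b) For norm-one $b\in\mathbb{H}$, neither $(\varphi,T_{b,b}\circ\sigma_{\mathbb{H}})$ nor $(\varphi,T_{b,-b}\circ\sigma_{\mathbb{H}})$ satisfies (ii).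
   Context: $T_{a,b}(x)=axb$ and $\sigma_{\mathbb{H}}(x)=\bar x$ on the quaternions $\mathbb{H}$; $\mathrm{Im}(\mathbb{H})$ is the space of pure quaternions. *)

theory Defs
  imports "HOL-Analysis.Analysis"
begin

datatype quat = Quat (Re: real) (Im1: real) (Im2: real) (Im3: real)

lemma quat_eqI [intro?]:
  "Re x = Re y \<Longrightarrow> Im1 x = Im1 y \<Longrightarrow> Im2 x = Im2 y \<Longrightarrow> Im3 x = Im3 y \<Longrightarrow> x = y"
  by (cases x, cases y) simp

lemma quat_eq_iff:
  "x = y \<longleftrightarrow> Re x = Re y \<and> Im1 x = Im1 y \<and> Im2 x = Im2 y \<and> Im3 x = Im3 y"
  by (auto intro: quat_eqI)

instantiation quat :: real_vector
begin
definition "0 = Quat 0 0 0 0"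
definition "x + y = Quat (Re x + Re y) (Im1 x + Im1 y) (Im2 x + Im2 y) (Im3 x + Im3 y)"
definition "- x = Quat (- Re x) (- Im1 x) (- Im2 x) (- Im3 x)"
definition "x - y = Quat (Re x - Re y) (Im1 x - Im1 y) (Im2 x - Im2 y) (Im3 x - Im3 y)"
definition "scaleR r x = Quat (r * Re x) (r * Im1 x) (r * Im2 x) (r * Im3 x)"
instance
  by standard (auto simp: quat_eq_iff zero_quat_def plus_quat_def uminus_quat_def
      minus_quat_def scaleR_quat_def algebra_simps)
end

instantiation quat :: real_algebra_1
begin
definition "1 = Quat 1 0 0 0"
text \<open>Hamilton product, with \<open>i j = k\<close>, \<open>j k = i\<close>, \<open>k i = j\<close>.\<close>
definition "x * y = Quat
   (Re x * Re y - Im1 x * Im1 y - Im2 x * Im2 y - Im3 x * Im3 y)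
   (Re x * Im1 y + Im1 x * Re y + Im2 x * Im3 y - Im3 x * Im2 y)
   (Re x * Im2 y - Im1 x * Im3 y + Im2 x * Re y + Im3 x * Im1 y)
   (Re x * Im3 y + Im1 x * Im2 y - Im2 x * Im1 y + Im3 x * Re y)"
instance
  by standard (auto simp: quat_eq_iff zero_quat_def plus_quat_def one_quat_def
      times_quat_def scaleR_quat_def algebra_simps)
end

instantiation quat :: real_inner
begin
definition "inner x y = Re x * Re y + Im1 x * Im1 y + Im2 x * Im2 y + Im3 x * Im3 y"
definition "norm (x::quat) = sqrt (inner x x)"
definition "sgn (x::quat) = scaleR (inverse (norm x)) x"
definition "dist (x::quat) y = norm (x - y)"
definition "uniformity = (INF e\<in>{0<..}. principal {(x::quat, y). dist x y < e})"
definition "open (U::quat set) \<longleftrightarrow> (\<forall>x\<in>U. \<forall>\<^sub>F (x', y) in uniformity. x' = x \<longrightarrow> y \<in> U)"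
instance
proof
  fix x y z :: quat and r :: real
  show "inner x y = inner y x" by (simp add: inner_quat_def algebra_simps)
  show "inner (x + y) z = inner x z + inner y z"
    by (simp add: inner_quat_def plus_quat_def algebra_simps)
  show "inner (scaleR r x) y = r * inner x y"
    by (simp add: inner_quat_def scaleR_quat_def algebra_simps)
  show "0 \<le> inner x x" by (simp add: inner_quat_def)
  show "inner x x = 0 \<longleftrightarrow> x = 0"
    by (simp add: inner_quat_def quat_eq_iff zero_quat_def add_nonneg_eq_0_iff)
  show "norm x = sqrt (inner x x)" by (rule norm_quat_def)
qed (simp_all add: sgn_quat_def dist_quat_def uniformity_quat_def open_quat_def)
end

definition qcnj :: "quat \<Rightarrow> quat" where
  "qcnj x = Quat (Re x) (- Im1 x) (- Im2 x) (- Im3 x)"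

definition pure_quats :: "quat set" where
  "pure_quats = {x. Re x = 0}"

definition T :: "quat \<Rightarrow> quat \<Rightarrow> quat \<Rightarrow> quat" where
  "T a b x = a * x * b"

definition linear_isometry :: "(quat \<Rightarrow> quat) \<Rightarrow> bool" where
  "linear_isometry \<psi> \<longleftrightarrow> linear \<psi> \<and> (\<forall>x. norm (\<psi> x) = norm x)"

definition cond_i :: "(quat \<Rightarrow> quat) \<Rightarrow> (quat \<Rightarrow> quat) \<Rightarrow> bool" where
  "cond_i \<phi> \<psi> \<longleftrightarrow> (\<forall>x. \<phi> (\<phi> x * x) = \<phi> x * x)"

definition cond_ii :: "(quat \<Rightarrow> quat) \<Rightarrow> (quat \<Rightarrow> quat) \<Rightarrow> bool" where
  "cond_ii \<phi> \<psi> \<longleftrightarrow> (\<forall>x. \<phi> (qcnj x * \<psi> x) = qcnj x * \<psi> x)"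

definition cond_iii :: "(quat \<Rightarrow> quat) \<Rightarrow> (quat \<Rightarrow> quat) \<Rightarrow> bool" where
  "cond_iii \<phi> \<psi> \<longleftrightarrow>
     (\<forall>x y. \<psi> (\<psi> y * qcnj x + y * \<phi> x) = \<psi> y * qcnj x + y * \<phi> x)"

end

theory Submission
  imports Defs
begin

lemma qcnj_mult: "qcnj (x*y) = qcnj y * qcnj x"
  by (simp add: quat_eq_iff qcnj_def times_quat_def algebra_simps)
lemma qcnj_qcnj[simp]: "qcnj (qcnj x) = x"
  by (simp add: quat_eq_iff qcnj_def)
lemma qcnj_minus[simp]: "qcnj (- x) = - qcnj x"
  by (simp add: quat_eq_iff qcnj_def uminus_quat_def)
lemma qcnj_add: "qcnj (x + y) = qcnj x + qcnj y"
  by (simp add: quat_eq_iff qcnj_def plus_quat_def)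
lemma qcnj_diff: "qcnj (x - y) = qcnj x - qcnj y"
  by (simp add: quat_eq_iff qcnj_def minus_quat_def)
lemma qcnj_scaleR: "qcnj (r *\<^sub>R x) = r *\<^sub>R qcnj x"
  by (simp add: quat_eq_iff qcnj_def scaleR_quat_def)
lemma qcnj_one[simp]: "qcnj 1 = 1"
  by (simp add: quat_eq_iff qcnj_def one_quat_def)
lemma mult_qcnj: "x * qcnj x = of_real (inner x x)"
  by (simp add: quat_eq_iff qcnj_def times_quat_def of_real_def scaleR_quat_def one_quat_def inner_quat_def algebra_simps)
lemma qcnj_mult_self: "qcnj x * x = of_real (inner x x)"
  by (simp add: quat_eq_iff qcnj_def times_quat_def of_real_def scaleR_quat_def one_quat_def inner_quat_def algebra_simps)
lemma unit_r: "norm x = 1 \<Longrightarrow> x * qcnj x = 1"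
  by (simp add: mult_qcnj norm_eq_1)
lemma unit_l: "norm x = 1 \<Longrightarrow> qcnj x * x = 1"
  by (simp add: qcnj_mult_self norm_eq_1)
lemma pure_cnj: "b \<in> pure_quats \<Longrightarrow> qcnj b = - b"
  by (simp add: pure_quats_def quat_eq_iff qcnj_def uminus_quat_def)
lemma pure_sq: "b \<in> pure_quats \<Longrightarrow> norm b = 1 \<Longrightarrow> b * b = -1"
  using unit_r[of b] pure_cnj[of b] by (simp add: minus_equation_iff)
lemma noncomm: "b \<in> pure_quats \<Longrightarrow> norm b = 1 \<Longrightarrow> \<exists>y. b*y \<noteq> y*b"
proof (rule ccontr)
  assume "b \<in> pure_quats" "norm b = 1" "\<not> (\<exists>y. b*y \<noteq> y*b)"
  hence "b * Quat 0 1 0 0 = Quat 0 1 0 0 * b" "b * Quat 0 0 1 0 = Quat 0 0 1 0 * b" by auto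
  hence "b = 0" using \<open>b \<in> pure_quats\<close>
    by (simp add: quat_eq_iff times_quat_def pure_quats_def zero_quat_def)
  thus False using \<open>norm b = 1\<close> by simp
qed
lemma zero_div: "d \<noteq> 0 \<Longrightarrow> d * M = (0::quat) \<Longrightarrow> M = 0"
proof -
  assume "d \<noteq> 0" "d * M = 0"
  hence "qcnj d * d * M = 0" by (simp add: mult.assoc)
  hence "of_real (inner d d) * M = 0" by (simp add: qcnj_mult_self)
  moreover have "inner d d \<noteq> 0" using \<open>d \<noteq> 0\<close> by simp
  ultimately show "M = 0" by (simp add: scaleR_conv_of_real[symmetric])
qed
lemma real_of_im0: "Im1 w = 0 \<Longrightarrow> Im2 w = 0 \<Longrightarrow> Im3 w = 0 \<Longrightarrow> w = of_real (Re w)"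
  by (simp add: quat_eq_iff of_real_def scaleR_quat_def one_quat_def)

lemma part1:
  fixes a :: quat
  assumes na: "norm a = 1"
  defines "\<phi> \<equiv> T a (qcnj a) \<circ> qcnj"
  shows "cond_i \<phi> \<psi> \<longleftrightarrow> (a * a = 1 \<or> a * a = -1)"
proof
  have al: "qcnj a * (a * z) = z" for z using unit_l[OF na] by (simp add: mult.assoc[symmetric])
  have ar: "a * (qcnj a * z) = z" for z using unit_r[OF na] by (simp add: mult.assoc[symmetric])
  assume ci: "cond_i \<phi> \<psi>"
  have key: "a*a*x*(qcnj a * qcnj a) = x" if xu: "x * qcnj x = 1" for x
  proof -
    have xr: "x * (qcnj x * z) = z" for z using xu by (simp add: mult.assoc[symmetric])
    have "\<phi> (\<phi> x * x) = \<phi> x * x" using ci by (simp add: cond_i_def)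
    hence "a * qcnj x * a * x * qcnj a * qcnj a = a * qcnj x * qcnj a * x"
      by (simp add: \<phi>_def T_def qcnj_mult mult.assoc)
    hence "a * (x*qcnj a * (a * qcnj x * a * x * qcnj a * qcnj a)) = a * (x*qcnj a*(a * qcnj x * qcnj a * x))" by simp
    thus ?thesis by (simp add: mult.assoc al ar xr)
  qed
  define w where "w = a*a"
  have ww: "qcnj w * w = 1" using al unit_l[OF na] by (simp add: w_def qcnj_mult mult.assoc)
  have comm: "w * x = x * w" if "x * qcnj x = 1" for x
  proof -
    have "w * x = w*x*(qcnj a * qcnj a)*(a*a)" using ww by (simp add: w_def qcnj_mult mult.assoc)
    also have "\<dots> = x * w" using key[OF that] by (simp add: w_def)
    finally show ?thesis .
  qed
  have "w * Quat 0 1 0 0 = Quat 0 1 0 0 * w" "w * Quat 0 0 1 0 = Quat 0 0 1 0 * w"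
    by (rule comm, simp add: quat_eq_iff qcnj_def times_quat_def one_quat_def)+
  hence im: "Im1 w = 0" "Im2 w = 0" "Im3 w = 0" by (simp_all add: quat_eq_iff times_quat_def)
  hence "Re w * Re w = 1" using ww by (simp add: quat_eq_iff times_quat_def qcnj_def one_quat_def)
  hence "Re w = 1 \<or> Re w = -1" by (metis mult_cancel_left1 mult_minus1 square_eq_1_iff)
  thus "a * a = 1 \<or> a * a = -1" using im unfolding w_def[symmetric]
    by (auto simp: quat_eq_iff one_quat_def uminus_quat_def)
next
  assume h: "a * a = 1 \<or> a * a = -1"
  have "x*qcnj x * z = z" if "x = a" for x z using unit_r[OF na] that by simp
  show "cond_i \<phi> \<psi>" using h
  proof
    assume aa: "a*a = 1"
    hence ca: "qcnj a = a" using unit_r[OF na]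
      by (metis mult.assoc mult_1_left mult_1_right)
    have aa2: "a*(a*z) = z" for z using aa by (simp add: mult.assoc[symmetric])
    show ?thesis by (simp add: cond_i_def \<phi>_def T_def qcnj_mult mult.assoc ca aa aa2)
  next
    assume aa: "a*a = -1"
    hence ca: "qcnj a = -a" using unit_r[OF na]
      by (metis mult.assoc mult_1_left mult_minus_left minus_minus)
    have aa2: "a*(a*z) = -z" for z using aa by (simp add: mult.assoc[symmetric])
    show ?thesis by (simp add: cond_i_def \<phi>_def T_def qcnj_mult mult.assoc ca aa aa2)
  qed
qed


lemma part2a:
  fixes a b c :: quat
  assumes na: "norm a = 1" and aa: "a * a = -1"
    and bp: "b \<in> pure_quats" and cp: "c \<in> pure_quats" and nb: "norm b = 1" and nc: "norm c = 1"
  defines "\<phi> \<equiv> T a (qcnj a) \<circ> qcnj"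
  shows "(cond_ii \<phi> (T b c) \<and> cond_iii \<phi> (T b c)) \<longleftrightarrow> (c = a \<or> c = - a)"
proof -
  have ca: "qcnj a = -a" using unit_r[OF na] aa
    by (metis mult.assoc mult_1_left mult_minus_left minus_minus)
  have aa2: "a*(a*z) = -z" for z using aa by (simp add: mult.assoc[symmetric])
  have bb: "b*b = -1" using pure_sq[OF bp nb] .
  have bb2: "b*(b*z) = -z" for z using bb by (simp add: mult.assoc[symmetric])
  have cb: "qcnj b = -b" using pure_cnj[OF bp] .
  have cc: "c*c = -1" using pure_sq[OF cp nc] .
  have cc2: "c*(c*z) = -z" for z using cc by (simp add: mult.assoc[symmetric])
  have ccn: "qcnj c = -c" using pure_cnj[OF cp] .
  show ?thesis
  proof
    assume "cond_ii \<phi> (T b c) \<and> cond_iii \<phi> (T b c)"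
    hence c3: "cond_iii \<phi> (T b c)" by simp
    have E: "b * y * (a*c*qcnj a*c + 1) = y * (a*c*qcnj a - c)" for y
    proof -
      have "T b c (T b c y * qcnj (- c) + y * \<phi> (-c)) = T b c y * qcnj (- c) + y * \<phi> (-c)"
        using c3 unfolding cond_iii_def by blast
      thus ?thesis
        by (simp add: \<phi>_def T_def ccn ca distrib_left distrib_right mult.assoc bb2 cc2 cc algebra_simps)
    qed
    obtain y where y: "b*y \<noteq> y*b" using noncomm[OF bp nb] by blast
    have "b * y * (a*c*qcnj a*c + 1) = y * (b * (a*c*qcnj a*c + 1))"
      using E[of y] E[of 1] by simp
    hence "(b*y - y*b) * (a*c*qcnj a*c + 1) = 0" by (simp add: algebra_simps)
    moreover have "b*y - y*b \<noteq> 0" using y by simp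
    ultimately have K: "a*c*qcnj a*c + 1 = 0" using zero_div by blast
    hence "a*c*qcnj a*c*(qcnj c) = -1 * qcnj c" by (simp add: eq_neg_iff_add_eq_0[symmetric])
    hence "a*c*qcnj a = c" using unit_r[OF nc] by (simp add: mult.assoc ccn cc)
    hence "a*c*qcnj a*a = c*a" by simp
    hence comm: "a*c = c*a" using unit_l[OF na] by (simp add: mult.assoc)
    have ap: "Re a = 0"
    proof (rule ccontr)
      assume "Re a \<noteq> 0"
      with aa have "Re a * Re a = -1" by (auto simp: quat_eq_iff times_quat_def one_quat_def uminus_quat_def)
      thus False using zero_le_square[of "Re a"] by linarith
    qed
    have im: "Im1 (a*c) = 0" "Im2 (a*c) = 0" "Im3 (a*c) = 0"
      using comm ap cp by (simp_all add: quat_eq_iff times_quat_def pure_quats_def mult.commute)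
    define r where "r = Re (a*c)"
    have acr: "a*c = of_real r" using real_of_im0[OF im] r_def by simp
    have "c = - (a*(a*c))" using aa2 by simp
    hence cr: "c = - (r *\<^sub>R a)" using acr by (simp add: of_real_def)
    hence "norm c = \<bar>r\<bar>" using na by simp
    hence "r = 1 \<or> r = -1" using nc by auto
    thus "c = a \<or> c = -a" using cr by auto
  next
    assume "c = a \<or> c = -a"
    thus "cond_ii \<phi> (T b c) \<and> cond_iii \<phi> (T b c)"
      by (auto simp: cond_ii_def cond_iii_def \<phi>_def T_def qcnj_mult qcnj_add ca cb mult.assoc aa2 aa bb2 bb distrib_left distrib_right left_diff_distrib right_diff_distrib)
  qed
qed

lemma part2b:
  fixes a b :: quat
  assumes na: "norm a = 1" and aa: "a * a = -1" and nb: "norm b = 1"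
  defines "\<phi> \<equiv> T a (qcnj a) \<circ> qcnj"
  shows "\<not> cond_ii \<phi> (T b b \<circ> qcnj) \<and> \<not> cond_ii \<phi> (T b (- b) \<circ> qcnj)"
proof -
  have ca: "qcnj a = -a" using unit_r[OF na] aa
    by (metis mult.assoc mult_1_left mult_minus_left minus_minus)
  have aa2: "a*(a*z) = -z" for z using aa by (simp add: mult.assoc[symmetric])
  have bl: "qcnj b * (b * z) = z" for z using unit_l[OF nb] by (simp add: mult.assoc[symmetric])
  have cb: "qcnj (b*a) = -(a * qcnj b)" using ca by (simp add: qcnj_mult)
  define x where "x = b * (1 - a)"
  have z: "qcnj x * (T b b \<circ> qcnj) x = 2 *\<^sub>R a"
    by (simp add: x_def T_def qcnj_mult ca mult.assoc bl algebra_simps aa scaleR_2 qcnj_diff cb unit_l[OF nb])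
  have z2: "qcnj x * (T b (-b) \<circ> qcnj) x = - (2 *\<^sub>R a)"
    by (simp add: x_def T_def qcnj_mult ca mult.assoc bl algebra_simps aa scaleR_2 qcnj_diff cb unit_l[OF nb])
  have ph: "\<phi> (2 *\<^sub>R a) = - (2 *\<^sub>R a)"
    by (simp add: \<phi>_def T_def ca aa qcnj_scaleR)
  have a0: "a \<noteq> 0" using na by auto
  have ne: "- (2 *\<^sub>R a) \<noteq> 2 *\<^sub>R a"
  proof
    assume "- (2 *\<^sub>R a) = 2 *\<^sub>R a"
    hence "a = 0" by (simp add: quat_eq_iff uminus_quat_def scaleR_quat_def zero_quat_def)
    with a0 show False by simp
  qed
  have ph2: "\<phi> (- (2 *\<^sub>R a)) = 2 *\<^sub>R a" using ph by (simp add: \<phi>_def T_def)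
  have n1: "\<not> cond_ii \<phi> (T b b \<circ> qcnj)"
  proof
    assume "cond_ii \<phi> (T b b \<circ> qcnj)"
    hence "\<phi> (qcnj x * (T b b \<circ> qcnj) x) = qcnj x * (T b b \<circ> qcnj) x"
      unfolding cond_ii_def by blast
    with z ph ne show False by simp
  qed
  have n2: "\<not> cond_ii \<phi> (T b (-b) \<circ> qcnj)"
  proof
    assume "cond_ii \<phi> (T b (-b) \<circ> qcnj)"
    hence "\<phi> (qcnj x * (T b (-b) \<circ> qcnj) x) = qcnj x * (T b (-b) \<circ> qcnj) x"
      unfolding cond_ii_def by blast
    with z2 ph2 ne show False by simp
  qed
  show ?thesis using n1 n2 by blast
qed


theorem lemma12:
  fixes a :: quat and \<psi> :: "quat \<Rightarrow> quat"
  assumes "norm a = 1"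
    and "linear_isometry \<psi>"
  defines "\<phi> \<equiv> T a (qcnj a) \<circ> qcnj"
  shows "(cond_i \<phi> \<psi> \<longleftrightarrow> (a * a = 1 \<or> a * a = -1))
    \<and> (a * a = -1 \<longrightarrow>
        (\<forall>b c. b \<in> pure_quats \<and> c \<in> pure_quats \<and> norm b = 1 \<and> norm c = 1 \<longrightarrow>
           ((cond_ii \<phi> (T b c) \<and> cond_iii \<phi> (T b c)) \<longleftrightarrow> (c = a \<or> c = - a)))
      \<and> (\<forall>b. norm b = 1 \<longrightarrow>
           \<not> cond_ii \<phi> (T b b \<circ> qcnj) \<and> \<not> cond_ii \<phi> (T b (- b) \<circ> qcnj)))"
  unfolding \<phi>_def
  using part1[OF assms(1)] part2a[OF assms(1)] part2b[OF assms(1)] by blast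

end
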